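(* Let $s\in(0,\frac12)$ and suppose the jump kernels $j_1^{(n)}$ satisfy both the upper and lower bound with this $s$. Then the sequence $(\mathcal{E}_1^{(n)},\ell(V_1^{(n)}))$ is asymptotically compact in the generalized sense: every sequence $u_n:V_1^{(n)}\to\mathbb{R}$ with $\liminf_{n\to\infty}\big(\mathcal{E}_1^{(n)}(u_n)+\sum_{x\in V_1^{(n)}}|u_n(x)|^2\mu_1^{(n)}(x)\big)<\infty$ has a subsequence $u_{n_k}$ such that $\operatorname{Ext}_1^{(n_k)}u_{n_k}$ converges strongly in $L^2([0,1],dx)$.
   Context: Index graph: vertices $\mathbb{N}$; vertex $i$ has edges $e_{i,2i-2}$ to $2i-2$ (only if $i\ge2$), $e_{i,2i-1},e'_{i,2i-1}$ to $2i-1$, $e_{i,2i}$ to $2i$, weights $r_e>0$ with $r_{e_{i,2i-1}}=r_{e'_{i,2i-1}}$. For $e$ from $i$ to $j$, $\phi_e(x)=\frac{j}{2i}x+s_e$, $s_e=0$ for $e\in\{e_{i,2i-1},e_{i,2i}\}$, $s_e=\frac1{2i}$ for $e\in\{e_{i,2i-2},e'_{i,2i-1}\}$. $E_1^{(n)}$: paths $\sigma=e_1\cdots e_n$ of length $n$ from vertex $1$; $\phi_\sigma=\phi_{e_1}\circ\cdots\circ\phi_{e_n}$, $\delta_\sigma=r_{e_1}\cdots r_{e_n}$. $V_1^{(n)}=\{k/2^n\}_{k=0}^{2^n}$; wires $\{\phi_\sigma(0),\phi_\sigma(1)\}$, $\sigma\in E_1^{(n)}$, are all pairs of distinct points of $V_1^{(n)}$,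 each with a unique path $\sigma^{(n)}_{x,y}$. $U_1^{(n)}(x)=[x-2^{-n-1},x+2^{-n-1})\cap[0,1]$, $\mu_1^{(n)}(x)=|U_1^{(n)}(x)|$. Kernel $j_1^{(n)}(x,y)=(\delta_{\sigma^{(n)}_{x,y}}\mu_1^{(n)}(x)\mu_1^{(n)}(y))^{-1}$ for $x\ne y$, $0$ for $x=y$. $\mathcal{E}_1^{(n)}(u)=\sum_{x,y\in V_1^{(n)}}(u(x)-u(y))^2j_1^{(n)}(x,y)\mu_1^{(n)}(x)\mu_1^{(n)}(y)$. Kernel bounds: there are $0<\lambda_1\le\Lambda_1$ with $\lambda_1|x-y|^{-1-2s}\le j_1^{(n)}(x,y)\le\Lambda_1|x-y|^{-1-2s}$ for all $n\ge0$ and distinct $x,y\in V_1^{(n)}$. $\operatorname{Ext}_1^{(n)}u(x)=u(\bar x)$ where $\bar x\in V_1^{(n)}$ satisfies $x\in U_1^{(n)}(\bar x)$. *)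

theory Defs
  imports "HOL-Analysis.Analysis"
begin

text \<open>Edge labels of the index graph at vertex i:
  EL = e_{i,2i-2} (only for i \<ge> 2), EM = e_{i,2i-1}, EM' = e'_{i,2i-1}, ER = e_{i,2i}.\<close>
datatype lbl = EL | EM | EMp | ER

fun tgt :: "nat \<Rightarrow> lbl \<Rightarrow> nat" where
  "tgt i EL = 2*i - 2"
| "tgt i EM = 2*i - 1"
| "tgt i EMp = 2*i - 1"
| "tgt i ER = 2*i"

definition edge_ok :: "nat \<Rightarrow> lbl \<Rightarrow> bool" where
  "edge_ok i e \<longleftrightarrow> (e = EL \<longrightarrow> i \<ge> 2)"

fun shift :: "nat \<Rightarrow> lbl \<Rightarrow> real" where
  "shift i EL = 1 / (2 * real i)"
| "shift i EM = 0"
| "shift i EMp = 1 / (2 * real i)"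
| "shift i ER = 0"

definition phi_e :: "nat \<Rightarrow> lbl \<Rightarrow> real \<Rightarrow> real" where
  "phi_e i e x = real (tgt i e) / (2 * real i) * x + shift i e"

fun vpath :: "nat \<Rightarrow> lbl list \<Rightarrow> bool" where
  "vpath i [] = True"
| "vpath i (e # es) = (edge_ok i e \<and> vpath (tgt i e) es)"

fun phiP :: "nat \<Rightarrow> lbl list \<Rightarrow> real \<Rightarrow> real" where
  "phiP i [] = id"
| "phiP i (e # es) = phi_e i e \<circ> phiP (tgt i e) es"

fun deltaP :: "(nat \<Rightarrow> lbl \<Rightarrow> real) \<Rightarrow> nat \<Rightarrow> lbl list \<Rightarrow> real" where
  "deltaP r i [] = 1"
| "deltaP r i (e # es) = r i e * deltaP r (tgt i e) es"

definition paths1 :: "nat \<Rightarrow> lbl list set" where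
  "paths1 n = {\<sigma>. length \<sigma> = n \<and> vpath 1 \<sigma>}"

definition V1 :: "nat \<Rightarrow> real set" where
  "V1 n = {real k / 2 ^ n | k. k \<le> 2 ^ n}"

definition sigma_xy :: "nat \<Rightarrow> real \<Rightarrow> real \<Rightarrow> lbl list" where
  "sigma_xy n x y = (THE \<sigma>. \<sigma> \<in> paths1 n \<and> {phiP 1 \<sigma> 0, phiP 1 \<sigma> 1} = {x, y})"

definition U1 :: "nat \<Rightarrow> real \<Rightarrow> real set" where
  "U1 n x = {x - 1 / 2 ^ (n+1) ..< x + 1 / 2 ^ (n+1)} \<inter> {0..1}"

definition mu1 :: "nat \<Rightarrow> real \<Rightarrow> real" where
  "mu1 n x = measure lborel (U1 n x)"

definition j1 :: "(nat \<Rightarrow> lbl \<Rightarrow> real) \<Rightarrow> nat \<Rightarrow> real \<Rightarrow> real \<Rightarrow> real" where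
  "j1 r n x y = (if x = y then 0
      else 1 / (deltaP r 1 (sigma_xy n x y) * mu1 n x * mu1 n y))"

definition E1 :: "(nat \<Rightarrow> lbl \<Rightarrow> real) \<Rightarrow> nat \<Rightarrow> (real \<Rightarrow> real) \<Rightarrow> real" where
  "E1 r n u = (\<Sum>x\<in>V1 n. \<Sum>y\<in>V1 n. (u x - u y)^2 * j1 r n x y * mu1 n x * mu1 n y)"

definition Ext1 :: "nat \<Rightarrow> (real \<Rightarrow> real) \<Rightarrow> real \<Rightarrow> real" where
  "Ext1 n u x = u (THE y. y \<in> V1 n \<and> x \<in> U1 n y)"

definition weights_ok :: "(nat \<Rightarrow> lbl \<Rightarrow> real) \<Rightarrow> bool" where
  "weights_ok r \<longleftrightarrow> (\<forall>i\<ge>1. (\<forall>e. edge_ok i e \<longrightarrow> r i e > 0) \<and> r i EM = r i EMp)"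

end

theory Submission
  imports Defs
begin

lemma V1_eq: "V1 n = (\<lambda>k. real k / 2^n) ` {..2^n}"
  unfolding V1_def by auto

lemma finite_V1[simp]: "finite (V1 n)"
  unfolding V1_eq by simp

lemma V1_range: "x \<in> V1 n \<Longrightarrow> 0 \<le> x \<and> x \<le> 1"
  unfolding V1_def by (auto simp: divide_le_eq_1 )

lemma U1_sub: "U1 n x \<subseteq> {0..1}"
  unfolding U1_def by auto

lemma U1_mem: "t \<in> U1 n x \<longleftrightarrow> x - 1/2^(n+1) \<le> t \<and> t < x + 1/2^(n+1) \<and> 0 \<le> t \<and> t \<le> 1"
  unfolding U1_def by auto

lemma U1_exists:
  assumes "0 \<le> t" "t \<le> 1"
  shows "\<exists>x\<in>V1 n. t \<in> U1 n x"
proof -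
  define k where "k = nat \<lfloor>t * 2^n + 1/2\<rfloor>"
  have f0: "0 \<le> \<lfloor>t * 2^n + 1/2\<rfloor>" using assms by simp
  have k: "real k = of_int \<lfloor>t * 2^n + 1/2\<rfloor>" using f0 unfolding k_def by simp
  have a: "real k \<le> t * 2^n + 1/2" "t * 2^n + 1/2 < real k + 1"
    unfolding k by linarith+
  have "t * 2^n \<le> 2^n" using assms by simp
  then have "real k < 2^n + 1" using a by linarith
  then have kle: "k \<le> 2^n"
    by (metis Suc_eq_plus1 less_Suc_eq_le of_nat_1 of_nat_add of_nat_less_iff of_nat_numeral of_nat_power)
  have p: "(0::real) < 2^n" by simp
  have "real k / 2^n - 1/2^(n+1) \<le> t"
    using a(1) p by (simp add: field_simps)
  moreover have "t < real k / 2^n + 1/2^(n+1)"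
    using a(2) p by (simp add: field_simps)
  ultimately show ?thesis using kle assms unfolding V1_def U1_mem by auto
qed

lemma U1_unique:
  assumes "x \<in> V1 n" "x' \<in> V1 n" "t \<in> U1 n x" "t \<in> U1 n x'"
  shows "x = x'"
proof -
  obtain k k' where kk: "x = real k / 2^n" "x' = real k' / 2^n" using assms(1,2) unfolding V1_def by auto
  have "\<bar>x - x'\<bar> < 2 / 2^(n+1)" using assms(3,4) unfolding U1_mem by auto
  then have "\<bar>real k - real k'\<bar> / 2^n < 1 / 2^n" unfolding kk
    by (simp add: diff_divide_distrib[symmetric])
  then have "\<bar>real k - real k'\<bar> < 1" by (simp add: divide_less_cancel)
  then have "k = k'" by linarith
  then show ?thesis using kk by simp
qed

definition cen :: "nat \<Rightarrow> real \<Rightarrow> real" where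
  "cen n t = (THE x. x \<in> V1 n \<and> t \<in> U1 n x)"

lemma cen:
  assumes "0 \<le> t" "t \<le> 1"
  shows "cen n t \<in> V1 n" "t \<in> U1 n (cen n t)"
proof -
  obtain x where "x \<in> V1 n" "t \<in> U1 n x" using U1_exists[OF assms] by blast
  then have "cen n t = x" unfolding cen_def
    by (intro the_equality) (auto intro: U1_unique)
  then show "cen n t \<in> V1 n" "t \<in> U1 n (cen n t)" using \<open>x \<in> V1 n\<close> \<open>t \<in> U1 n x\<close> by auto
qed

lemma ind_U1:
  assumes "0 \<le> t" "t \<le> 1" "x \<in> V1 n"
  shows "indicator (U1 n x) t = (if x = cen n t then 1 else (0::'a::zero_neq_one))"
  using cen[OF assms(1,2), of n] U1_unique[OF assms(3) _ _] by (auto simp: indicator_def)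

lemma ind_U1_out: "\<not> (0 \<le> t \<and> t \<le> 1) \<Longrightarrow> indicator (U1 n x) t = 0"
  by (auto simp: indicator_def U1_mem)

lemma Ext1_cen: "0 \<le> t \<Longrightarrow> t \<le> 1 \<Longrightarrow> Ext1 n w t = w (cen n t)"
  unfolding Ext1_def cen_def by simp

definition Sf :: "nat \<Rightarrow> (real \<Rightarrow> real) \<Rightarrow> real \<Rightarrow> real" where
  "Sf n w t = (\<Sum>x\<in>V1 n. w x * indicator (U1 n x) t)"

lemma Sf_in: "0 \<le> t \<Longrightarrow> t \<le> 1 \<Longrightarrow> Sf n w t = w (cen n t)"
proof -
  assume t: "0 \<le> t" "t \<le> 1"
  have "Sf n w t = (\<Sum>x\<in>V1 n. if x = cen n t then w x else 0)"
    unfolding Sf_def by (rule sum.cong) (auto simp: ind_U1[OF t])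
  also have "\<dots> = w (cen n t)" using cen[OF t, of n] by (simp add: sum.delta')
  finally show ?thesis .
qed

lemma Sf_out: "\<not> (0 \<le> t \<and> t \<le> 1) \<Longrightarrow> Sf n w t = 0"
  unfolding Sf_def by (simp add: ind_U1_out)

lemma Sf_meas[measurable]: "Sf n w \<in> borel_measurable lborel"
  unfolding Sf_def U1_def by measurable


lemma U1_sets[measurable]: "U1 n x \<in> sets borel"
  unfolding U1_def by simp

lemma U1_sets'[measurable]: "U1 n x \<in> sets lborel"
  by simp

lemma sum_delta_mult: "finite A \<Longrightarrow> (\<Sum>y\<in>A. f y * (if y = c then 1 else 0)) = (if c \<in> A then f c else (0::real))"
proof -
  assume "finite A"
  have "(\<Sum>y\<in>A. f y * (if y = c then 1 else 0)) = (\<Sum>y\<in>A. if y = c then f y else 0)"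
    by (intro sum.cong) auto
  then show ?thesis using \<open>finite A\<close> by (simp add: sum.delta')
qed

lemma ennreal_mult_ind: "0 \<le> a \<Longrightarrow> ennreal (a * indicator A t) = ennreal a * indicator A t"
  by (simp add: indicator_def)

definition wt :: "nat \<Rightarrow> nat \<Rightarrow> real \<Rightarrow> real \<Rightarrow> real" where
  "wt n m x y = measure lborel (U1 n x \<inter> U1 m y)"

lemma emeasure_sub01:
  fixes A :: "real set"
  assumes "A \<subseteq> {0..1}" "A \<in> sets lborel"
  shows "emeasure lborel A = ennreal (measure lborel A)"
proof (rule emeasure_eq_ennreal_measure)
  have "emeasure lborel A \<le> emeasure lborel {0..(1::real)}"
    by (rule emeasure_mono[OF assms(1)]) simp
  then show "emeasure lborel A \<noteq> top" by (auto simp: top_unique)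
qed

lemma mu1_emeasure: "emeasure lborel (U1 n x) = ennreal (mu1 n x)"
  unfolding mu1_def by (rule emeasure_sub01) (auto simp: U1_sub)

lemma wt_emeasure: "emeasure lborel (U1 n x \<inter> U1 m y) = ennreal (wt n m x y)"
  unfolding wt_def by (rule emeasure_sub01) (use U1_sub in auto)

lemma wt_nonneg: "0 \<le> wt n m x y"
  unfolding wt_def by simp

lemma mu1_nonneg: "0 \<le> mu1 n x"
  unfolding mu1_def by simp

lemma wt_le: "wt n m x y \<le> mu1 n x"
proof -
  have "emeasure lborel (U1 n x \<inter> U1 m y) \<le> emeasure lborel (U1 n x)"
    by (intro emeasure_mono) auto
  then show ?thesis unfolding wt_emeasure mu1_emeasure
    using mu1_nonneg by simp
qed

lemma sq_diff_ind:
  "(Sf n u t - Sf m v t)^2 = (\<Sum>x\<in>V1 n. \<Sum>y\<in>V1 m. (u x - v y)^2 * indicator (U1 n x \<inter> U1 m y) t)"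
proof (cases "0 \<le> t \<and> t \<le> 1")
  case True
  then have t: "0 \<le> t" "t \<le> 1" by auto
  have "(\<Sum>x\<in>V1 n. \<Sum>y\<in>V1 m. (u x - v y)^2 * indicator (U1 n x \<inter> U1 m y) t)
      = (\<Sum>x\<in>V1 n. (\<Sum>y\<in>V1 m. (u x - v y)^2 * indicator (U1 m y) t) * indicator (U1 n x) t)"
    unfolding indicator_inter_arith sum_distrib_right by (intro sum.cong refl) (simp add: ac_simps)
  also have "\<dots> = (\<Sum>x\<in>V1 n. (u x - v (cen m t))^2 * indicator (U1 n x) t)"
    using Sf_in[OF t, of m "\<lambda>y. (u _ - v y)^2"] unfolding Sf_def by simp
  also have "\<dots> = (u (cen n t) - v (cen m t))^2"
    using Sf_in[OF t, of n "\<lambda>x. (u x - v (cen m t))^2"] unfolding Sf_def by simp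
  finally show ?thesis using Sf_in[OF t] by simp
next
  case False
  then show ?thesis by (simp add: Sf_out indicator_inter_arith ind_U1_out)
qed


lemma int_sq_diff:
  "(\<integral>\<^sup>+t. ennreal ((Sf n u t - Sf m v t)^2) \<partial>lborel)
     = ennreal (\<Sum>x\<in>V1 n. \<Sum>y\<in>V1 m. (u x - v y)^2 * wt n m x y)"
proof -
  have "(\<integral>\<^sup>+t. ennreal ((Sf n u t - Sf m v t)^2) \<partial>lborel)
     = (\<integral>\<^sup>+t. (\<Sum>x\<in>V1 n. \<Sum>y\<in>V1 m. ennreal ((u x - v y)^2) * indicator (U1 n x \<inter> U1 m y) t) \<partial>lborel)"
    unfolding sq_diff_ind
  proof (intro nn_integral_cong)
    fix t
    have "ennreal (\<Sum>x\<in>V1 n. \<Sum>y\<in>V1 m. (u x - v y)^2 * indicator (U1 n x \<inter> U1 m y) t)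
      = (\<Sum>x\<in>V1 n. ennreal (\<Sum>y\<in>V1 m. (u x - v y)^2 * indicator (U1 n x \<inter> U1 m y) t))"
      by (rule sum_ennreal[symmetric]) (simp add: sum_nonneg)
    also have "\<dots> = (\<Sum>x\<in>V1 n. \<Sum>y\<in>V1 m. ennreal ((u x - v y)^2 * indicator (U1 n x \<inter> U1 m y) t))"
      by (intro sum.cong refl sum_ennreal[symmetric]) simp
    also have "\<dots> = (\<Sum>x\<in>V1 n. \<Sum>y\<in>V1 m. ennreal ((u x - v y)^2) * indicator (U1 n x \<inter> U1 m y) t)"
      by (intro sum.cong refl ennreal_mult_ind) simp
    finally show "ennreal (\<Sum>x\<in>V1 n. \<Sum>y\<in>V1 m. (u x - v y)^2 * indicator (U1 n x \<inter> U1 m y) t)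
      = (\<Sum>x\<in>V1 n. \<Sum>y\<in>V1 m. ennreal ((u x - v y)^2) * indicator (U1 n x \<inter> U1 m y) t)" .
  qed
  also have "\<dots> = (\<Sum>x\<in>V1 n. (\<integral>\<^sup>+t. (\<Sum>y\<in>V1 m. ennreal ((u x - v y)^2) * indicator (U1 n x \<inter> U1 m y) t) \<partial>lborel))"
    by (rule nn_integral_sum) measurable
  also have "\<dots> = (\<Sum>x\<in>V1 n. \<Sum>y\<in>V1 m. (\<integral>\<^sup>+t. ennreal ((u x - v y)^2) * indicator (U1 n x \<inter> U1 m y) t \<partial>lborel))"
    by (intro sum.cong refl nn_integral_sum) simp
  also have "\<dots> = (\<Sum>x\<in>V1 n. \<Sum>y\<in>V1 m. ennreal ((u x - v y)^2 * wt n m x y))"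
    by (intro sum.cong refl) (simp add: nn_integral_cmult_indicator wt_emeasure ennreal_mult wt_nonneg)
  also have "\<dots> = ennreal (\<Sum>x\<in>V1 n. \<Sum>y\<in>V1 m. (u x - v y)^2 * wt n m x y)"
    by (simp add: sum_nonneg wt_nonneg)
  finally show ?thesis .
qed

lemma sum_ind_U1: "(\<Sum>y\<in>V1 m. indicator (U1 m y) t) = (indicator {0..1} t :: real)"
proof (cases "0 \<le> t \<and> t \<le> 1")
  case True
  then have t: "0 \<le> t" "t \<le> 1" by auto
  have "(\<Sum>y\<in>V1 m. indicator (U1 m y) t) = (\<Sum>y\<in>V1 m. if y = cen m t then 1 else (0::real))"
    by (intro sum.cong refl) (simp add: ind_U1[OF t])
  then show ?thesis using cen[OF t, of m] t by simp
next
  case False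
  then show ?thesis by (simp add: ind_U1_out)
qed

lemma ennreal_sum_ind: "(\<Sum>y\<in>A. indicator (B y) t :: ennreal) = ennreal (\<Sum>y\<in>A. indicator (B y) t)"
proof -
  have "ennreal (\<Sum>y\<in>A. indicator (B y) t) = (\<Sum>y\<in>A. ennreal (indicator (B y) t))"
    by (rule sum_ennreal[symmetric]) simp
  then show ?thesis by (simp add: ennreal_indicator)
qed

lemma wt_rowsum: "(\<Sum>y\<in>V1 m. wt n m x y) = mu1 n x"
proof -
  have "ennreal (mu1 n x) = (\<integral>\<^sup>+t. indicator (U1 n x) t \<partial>lborel)"
    by (subst nn_integral_indicator) (simp_all add: mu1_emeasure)
  also have "\<dots> = (\<integral>\<^sup>+t. (\<Sum>y\<in>V1 m. indicator (U1 n x \<inter> U1 m y) t) \<partial>lborel)"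
  proof (intro nn_integral_cong)
    fix t
    have "(\<Sum>y\<in>V1 m. indicator (U1 n x \<inter> U1 m y) t :: real) = indicator (U1 n x) t * indicator {0..1} t"
      by (simp add: indicator_inter_arith sum_ind_U1 flip: sum_distrib_left)
    also have "\<dots> = indicator (U1 n x) t" using U1_sub[of n x] by (auto simp: indicator_def)
    finally have "(\<Sum>y\<in>V1 m. indicator (U1 n x \<inter> U1 m y) t :: real) = indicator (U1 n x) t" .
    then show "(indicator (U1 n x) t :: ennreal) = (\<Sum>y\<in>V1 m. indicator (U1 n x \<inter> U1 m y) t)"
      by (simp add: ennreal_sum_ind ennreal_indicator[symmetric])
  qed
  also have "\<dots> = (\<Sum>y\<in>V1 m. ennreal (wt n m x y))"
    by (simp add: nn_integral_sum wt_emeasure)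
  also have "\<dots> = ennreal (\<Sum>y\<in>V1 m. wt n m x y)" by (simp add: wt_nonneg sum_nonneg)
  finally show ?thesis by (simp add: mu1_nonneg sum_nonneg wt_nonneg)
qed

lemma wt_sym: "wt n m x y = wt m n y x"
  unfolding wt_def by (simp add: Int_commute)

lemma wt_colsum: "(\<Sum>x\<in>V1 n. wt n m x y) = mu1 m y"
proof -
  have "(\<Sum>x\<in>V1 n. wt n m x y) = (\<Sum>x\<in>V1 n. wt m n y x)"
    by (intro sum.cong refl) (rule wt_sym)
  also have "\<dots> = mu1 m y" by (rule wt_rowsum)
  finally show ?thesis .
qed

lemma sum_mu1: "(\<Sum>y\<in>V1 m. mu1 m y) = 1"
proof -
  have "ennreal 1 = (\<integral>\<^sup>+t. indicator {0..1::real} t \<partial>lborel)"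
    by (subst nn_integral_indicator) simp_all
  also have "\<dots> = (\<integral>\<^sup>+t. (\<Sum>y\<in>V1 m. indicator (U1 m y) t) \<partial>lborel)"
    by (intro nn_integral_cong)
       (simp add: ennreal_sum_ind sum_ind_U1 ennreal_indicator[symmetric])
  also have "\<dots> = (\<Sum>y\<in>V1 m. ennreal (mu1 m y))"
    by (simp add: nn_integral_sum mu1_emeasure)
  also have "\<dots> = ennreal (\<Sum>y\<in>V1 m. mu1 m y)" by (simp add: mu1_nonneg sum_nonneg)
  finally show ?thesis by (simp add: mu1_nonneg sum_nonneg)
qed


lemma mu1_lower:
  assumes "y \<in> V1 m"
  shows "1 / 2^(m+1) \<le> mu1 m y"
proof -
  define h :: real where "h = 1 / 2^(m+1)"
  have h: "0 < h" "h \<le> 1/2" unfolding h_def by (auto simp: field_simps)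
  have y: "0 \<le> y" "y \<le> 1" using V1_range[OF assms] by auto
  have U: "U1 m y = {y - h..<y+h} \<inter> {0..1}" unfolding U1_def h_def by simp
  have "emeasure lborel {a..<a+h} \<le> emeasure lborel (U1 m y)" if "{a..<a+h} \<subseteq> U1 m y" for a
    by (rule emeasure_mono[OF that]) simp
  moreover have "emeasure lborel {a..<a+h} = ennreal h" for a
    using h by simp
  moreover have "\<exists>a. {a..<a+h} \<subseteq> U1 m y"
  proof (cases "y + h \<le> 1")
    case True
    then have "{y..<y+h} \<subseteq> U1 m y" using y h unfolding U by auto
    then show ?thesis by blast
  next
    case False
    then have "{y-h..<y-h+h} \<subseteq> U1 m y" using y h unfolding U by auto
    then show ?thesis by blast
  qed
  ultimately have "ennreal h \<le> ennreal (mu1 m y)" unfolding mu1_emeasure by metis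
  then show ?thesis using mu1_nonneg unfolding h_def by simp
qed

lemma wt_pos_close:
  assumes "wt n m x y > 0"
  shows "\<bar>x - y\<bar> \<le> 1/2^(n+1) + 1/2^(m+1)"
proof -
  have "U1 n x \<inter> U1 m y \<noteq> {}" using assms unfolding wt_def by auto
  then obtain t where "t \<in> U1 n x" "t \<in> U1 m y" by auto
  then show ?thesis unfolding U1_mem by auto
qed


lemma cs_avg:
  fixes a b :: "'i \<Rightarrow> real"
  assumes fin: "finite A" and a: "\<And>i. i \<in> A \<Longrightarrow> 0 \<le> a i" and W: "(\<Sum>i\<in>A. a i) = W" "0 < W"
  shows "((\<Sum>i\<in>A. a i * b i) / W)^2 \<le> (\<Sum>i\<in>A. a i * (b i)^2) / W"
proof -
  define \<mu> where "\<mu> = (\<Sum>i\<in>A. a i * b i) / W"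
  have S: "(\<Sum>i\<in>A. a i * b i) = \<mu> * W" unfolding \<mu>_def using W by simp
  have "0 \<le> (\<Sum>i\<in>A. a i * (b i - \<mu>)^2)" using a by (intro sum_nonneg) simp
  also have "(\<Sum>i\<in>A. a i * (b i - \<mu>)^2) = (\<Sum>i\<in>A. a i * (b i)^2) - 2 * \<mu> * (\<Sum>i\<in>A. a i * b i) + \<mu>^2 * (\<Sum>i\<in>A. a i)"
    by (simp add: power2_eq_square algebra_simps sum.distrib sum_subtractf sum_distrib_left)
  also have "\<dots> = (\<Sum>i\<in>A. a i * (b i)^2) - \<mu>^2 * W" using S W by (simp add: power2_eq_square)
  finally have "\<mu>^2 * W \<le> (\<Sum>i\<in>A. a i * (b i)^2)" by simp
  then show ?thesis unfolding \<mu>_def[symmetric] using W by (simp add: field_simps)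
qed

lemma mu1_pos: "y \<in> V1 m \<Longrightarrow> 0 < mu1 m y"
  using mu1_lower[of y m] by (smt (verit) divide_pos_pos zero_less_power)

lemma inv_mu1: "y \<in> V1 m \<Longrightarrow> 1 / mu1 m y \<le> 2^(m+1)"
  using mu1_lower[of y m] mu1_pos[of y m]
  by (simp add: field_simps)

definition avg :: "nat \<Rightarrow> nat \<Rightarrow> (real \<Rightarrow> real) \<Rightarrow> real \<Rightarrow> real" where
  "avg n m u y = (\<Sum>x\<in>V1 n. wt n m x y * u x) / mu1 m y"

lemma avg_diff_sq:
  assumes y: "y \<in> V1 m"
  shows "(u x - avg n m u y)^2 \<le> (\<Sum>x'\<in>V1 n. wt n m x' y * (u x - u x')^2) / mu1 m y"
proof -
  have W: "(\<Sum>x'\<in>V1 n. wt n m x' y) = mu1 m y" "0 < mu1 m y" using wt_colsum mu1_pos[OF y] by auto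
  have "u x - avg n m u y = (\<Sum>x'\<in>V1 n. wt n m x' y * (u x - u x')) / mu1 m y"
    using W unfolding avg_def
    by (simp add: algebra_simps sum_subtractf flip: sum_distrib_left sum_distrib_right add: field_simps)
  then show ?thesis using cs_avg[OF finite_V1 wt_nonneg W] by simp
qed

lemma avg_sq:
  assumes y: "y \<in> V1 m"
  shows "(avg n m u y)^2 \<le> 2^(m+1) * (\<Sum>x\<in>V1 n. (u x)^2 * mu1 n x)"
proof -
  have W: "(\<Sum>x'\<in>V1 n. wt n m x' y) = mu1 m y" "0 < mu1 m y" using wt_colsum mu1_pos[OF y] by auto
  have "(avg n m u y)^2 \<le> (\<Sum>x\<in>V1 n. wt n m x y * (u x)^2) / mu1 m y"
    unfolding avg_def by (rule cs_avg[OF finite_V1 wt_nonneg W])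
  also have "\<dots> = (\<Sum>x\<in>V1 n. wt n m x y * (u x)^2) * (1 / mu1 m y)" by simp
  also have "\<dots> \<le> (\<Sum>x\<in>V1 n. (u x)^2 * mu1 n x) * 2^(m+1)"
  proof (rule mult_mono)
    show "(\<Sum>x\<in>V1 n. wt n m x y * (u x)^2) \<le> (\<Sum>x\<in>V1 n. (u x)^2 * mu1 n x)"
      by (intro sum_mono) (metis mult.commute mult_left_mono wt_le zero_le_power2)
    show "1 / mu1 m y \<le> 2^(m+1)" by (rule inv_mu1[OF y])
    show "0 \<le> (\<Sum>x\<in>V1 n. (u x)^2 * mu1 n x)" by (intro sum_nonneg mult_nonneg_nonneg mu1_nonneg) simp
  qed (auto intro: sum_nonneg mu1_nonneg)
  finally show ?thesis by (simp add: mult.commute)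
qed


lemma j1_nonneg:
  assumes lam: "0 < lam1"
    and lb: "\<And>x y. x \<in> V1 n \<Longrightarrow> y \<in> V1 n \<Longrightarrow> x \<noteq> y \<Longrightarrow> lam1 * \<bar>x - y\<bar> powr (-(1 + 2 * s)) \<le> j1 r n x y"
    and x: "x \<in> V1 n" "x' \<in> V1 n"
  shows "0 \<le> j1 r n x x'"
proof (cases "x = x'")
  case True then show ?thesis by (simp add: j1_def)
next
  case False
  have "0 \<le> lam1 * \<bar>x - x'\<bar> powr (-(1 + 2 * s))" using lam by simp
  then show ?thesis using lb[OF x False] by linarith
qed

lemma term_bound:
  assumes mn: "m \<le> n" and lam: "0 < lam1" and s: "0 \<le> s"
    and lb: "\<And>x y. x \<in> V1 n \<Longrightarrow> y \<in> V1 n \<Longrightarrow> x \<noteq> y \<Longrightarrow> lam1 * \<bar>x - y\<bar> powr (-(1 + 2 * s)) \<le> j1 r n x y"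
    and x: "x \<in> V1 n" "x' \<in> V1 n"
  shows "wt n m x y * wt n m x' y * (u x - u x')^2
     \<le> wt n m x y * mu1 n x' * ((2/2^m) powr (1 + 2 * s) / lam1) * ((u x - u x')^2 * j1 r n x x')"
proof -
  have j0: "0 \<le> j1 r n x x'" by (rule j1_nonneg[OF lam lb x]) auto
  have K0: "0 \<le> (2/2^m) powr (1 + 2 * s) / lam1" using lam by simp
  show ?thesis
  proof (cases "x = x' \<or> wt n m x y = 0 \<or> wt n m x' y = 0")
    case True
    have "0 \<le> wt n m x y * mu1 n x' * ((2/2^m) powr (1 + 2 * s) / lam1) * ((u x - u x')^2 * j1 r n x x')"
      using j0 K0 by (intro mult_nonneg_nonneg wt_nonneg mu1_nonneg) auto
    moreover have "wt n m x y * wt n m x' y * (u x - u x')^2 = 0" using True by auto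
    ultimately show ?thesis by linarith
  next
    case False
    then have ne: "x \<noteq> x'" and p1: "wt n m x y > 0" and p2: "wt n m x' y > 0"
      using wt_nonneg[of n m x y] wt_nonneg[of n m x' y] by auto
    have c1: "\<bar>x - y\<bar> \<le> 1/2^(n+1) + 1/2^(m+1)" by (rule wt_pos_close[OF p1])
    have c2: "\<bar>x' - y\<bar> \<le> 1/2^(n+1) + 1/2^(m+1)" by (rule wt_pos_close[OF p2])
    have hn: "(1::real)/2^(n+1) \<le> 1/2^(m+1)" using mn by (intro divide_left_mono power_increasing) auto
    have h2: "4 * (1/2^(m+1)) = (2::real)/2^m" by simp
    have "\<bar>x - x'\<bar> \<le> \<bar>x - y\<bar> + \<bar>x' - y\<bar>" by linarith
    then have dle: "\<bar>x - x'\<bar> \<le> 2/2^m" using c1 c2 hn h2 by linarith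
    have dpos: "0 < \<bar>x - x'\<bar>" using ne by simp
    have "(2/2^m) powr (-(1 + 2 * s)) \<le> \<bar>x - x'\<bar> powr (-(1 + 2 * s))"
      by (rule powr_mono2'[OF _ dpos dle]) (use s in simp)
    moreover have "(2/2^m) powr (1 + 2 * s) * (2/2^m) powr (-(1 + 2 * s)) = (1::real)"
      by (simp add: powr_add[symmetric])
    ultimately have "1 \<le> (2/2^m) powr (1 + 2 * s) * \<bar>x - x'\<bar> powr (-(1 + 2 * s))"
      by (metis mult_left_mono powr_ge_zero)
    also have "\<dots> \<le> (2/2^m) powr (1 + 2 * s) * (j1 r n x x' / lam1)"
      using lb[OF x ne] lam by (intro mult_left_mono) (simp_all add: field_simps)
    finally have one: "1 \<le> (2/2^m) powr (1 + 2 * s) / lam1 * j1 r n x x'" by simp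
    have "wt n m x y * wt n m x' y * (u x - u x')^2 \<le> wt n m x y * mu1 n x' * (u x - u x')^2"
      by (intro mult_right_mono mult_left_mono wt_le wt_nonneg) simp
    also have "\<dots> = wt n m x y * mu1 n x' * (u x - u x')^2 * 1" by simp
    also have "\<dots> \<le> wt n m x y * mu1 n x' * (u x - u x')^2 * ((2/2^m) powr (1 + 2 * s) / lam1 * j1 r n x x')"
      by (intro mult_left_mono[OF one] mult_nonneg_nonneg wt_nonneg mu1_nonneg) simp
    finally show ?thesis by (simp add: ac_simps)
  qed
qed


lemma approx_bound:
  assumes mn: "m \<le> n" and lam: "0 < lam1" and s: "0 \<le> s"
    and lb: "\<And>x y. x \<in> V1 n \<Longrightarrow> y \<in> V1 n \<Longrightarrow> x \<noteq> y \<Longrightarrow> lam1 * \<bar>x - y\<bar> powr (-(1 + 2 * s)) \<le> j1 r n x y"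
  shows "(\<Sum>x\<in>V1 n. \<Sum>y\<in>V1 m. (u x - avg n m u y)^2 * wt n m x y)
     \<le> 2^(m+1) * ((2/2^m) powr (1 + 2 * s) / lam1) * E1 r n u"
proof -
  define K where "K = (2/2^m) powr (1 + 2 * s) / lam1"
  define c :: real where "c = 2^(m+1)"
  define g where "g x x' = (u x - u x')^2 * j1 r n x x'" for x x'
  have "(\<Sum>x\<in>V1 n. \<Sum>y\<in>V1 m. (u x - avg n m u y)^2 * wt n m x y)
     \<le> (\<Sum>x\<in>V1 n. \<Sum>y\<in>V1 m. ((\<Sum>x'\<in>V1 n. wt n m x' y * (u x - u x')^2) * c) * wt n m x y)"
  proof (intro sum_mono mult_right_mono wt_nonneg)
    fix x y assume y: "y \<in> V1 m"
    have "(u x - avg n m u y)^2 \<le> (\<Sum>x'\<in>V1 n. wt n m x' y * (u x - u x')^2) * (1 / mu1 m y)"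
      using avg_diff_sq[OF y, of u x n] by simp
    also have "\<dots> \<le> (\<Sum>x'\<in>V1 n. wt n m x' y * (u x - u x')^2) * c"
      unfolding c_def by (intro mult_left_mono inv_mu1[OF y] sum_nonneg mult_nonneg_nonneg wt_nonneg) auto
    finally show "(u x - avg n m u y)^2 \<le> (\<Sum>x'\<in>V1 n. wt n m x' y * (u x - u x')^2) * c" .
  qed
  also have "\<dots> = (\<Sum>x\<in>V1 n. \<Sum>y\<in>V1 m. \<Sum>x'\<in>V1 n. c * (wt n m x y * wt n m x' y * (u x - u x')^2))"
    by (simp add: sum_distrib_left sum_distrib_right ac_simps)
  also have "\<dots> \<le> (\<Sum>x\<in>V1 n. \<Sum>y\<in>V1 m. \<Sum>x'\<in>V1 n. c * (wt n m x y * mu1 n x' * K * g x x'))"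
    unfolding K_def g_def c_def
    by (intro sum_mono mult_left_mono term_bound[OF mn lam s lb]) auto
  also have "\<dots> = (\<Sum>x\<in>V1 n. \<Sum>x'\<in>V1 n. \<Sum>y\<in>V1 m. c * (wt n m x y * mu1 n x' * K * g x x'))"
    by (intro sum.cong refl sum.swap)
  also have "\<dots> = (\<Sum>x\<in>V1 n. \<Sum>x'\<in>V1 n. c * K * (g x x' * mu1 n x * mu1 n x'))"
  proof (intro sum.cong refl)
    fix x x'
    have "(\<Sum>y\<in>V1 m. c * (wt n m x y * mu1 n x' * K * g x x')) = c * K * g x x' * mu1 n x' * (\<Sum>y\<in>V1 m. wt n m x y)"
      by (simp add: sum_distrib_left ac_simps)
    then show "(\<Sum>y\<in>V1 m. c * (wt n m x y * mu1 n x' * K * g x x')) = c * K * (g x x' * mu1 n x * mu1 n x')"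
      by (simp add: wt_rowsum)
  qed
  also have "\<dots> = c * K * E1 r n u"
    unfolding E1_def g_def by (simp add: sum_distrib_left)
  finally show ?thesis unfolding c_def K_def .
qed


lemma diag:
  fixes D :: "nat \<Rightarrow> nat \<Rightarrow> ennreal"
  assumes step: "\<And>\<epsilon> K. \<epsilon> > 0 \<Longrightarrow> infinite K \<Longrightarrow> \<exists>K'\<subseteq>K. infinite K' \<and> (\<forall>a\<in>K'. \<forall>b\<in>K'. D a b < ennreal \<epsilon>)"
  shows "\<exists>r. strict_mono r \<and> (\<forall>i j. i \<le> j \<longrightarrow> D (r i) (r j) < ennreal ((1/4)^i))"
proof -
  define P where "P i p \<longleftrightarrow> infinite (fst p) \<and> snd p \<in> fst p \<and> (\<forall>a\<in>fst p. \<forall>b\<in>fst p. D a b < ennreal ((1/4)^i))"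
    for i :: nat and p :: "nat set \<times> nat"
  define Q where "Q (i::nat) p p' \<longleftrightarrow> fst p' \<subseteq> fst p \<and> snd p < snd p'" for i :: nat and p p' :: "nat set \<times> nat"
  have "\<exists>f. \<forall>n. P n (f n) \<and> Q n (f n) (f (Suc n))"
  proof (rule dependent_nat_choice)
    obtain K' where K': "infinite K'" "\<forall>a\<in>K'. \<forall>b\<in>K'. D a b < ennreal ((1/4)^0)"
      using step[of 1 UNIV] by auto
    then obtain k where "k \<in> K'" by (metis finite.emptyI ex_in_conv)
    then show "\<exists>x. P 0 x" using K' unfolding P_def by (intro exI[of _ "(K', k)"]) auto
  next
    fix p n assume "P n p"
    then have inf: "infinite (fst p)" unfolding P_def by auto
    obtain K' where K': "K' \<subseteq> fst p" "infinite K'" "\<forall>a\<in>K'. \<forall>b\<in>K'. D a b < ennreal ((1/4)^Suc n)"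
      using step[OF _ inf, of "(1/4)^Suc n"] by auto
    then obtain k where "k \<in> K'" "snd p < k"
      by (metis infinite_nat_iff_unbounded)
    then show "\<exists>p'. P (Suc n) p' \<and> Q n p p'" using K' unfolding P_def Q_def
      by (intro exI[of _ "(K', k)"]) auto
  qed
  then obtain f where f: "\<And>n. P n (f n)" "\<And>n. Q n (f n) (f (Suc n))" by blast
  define r where "r n = snd (f n)" for n
  have "strict_mono r" unfolding strict_mono_Suc_iff r_def using f(2) unfolding Q_def by auto
  moreover have anti: "fst (f j) \<subseteq> fst (f i)" if "i \<le> j" for i j
    using that
  proof (induction j)
    case 0 then show ?case by simp
  next
    case (Suc j)
    show ?case
    proof (cases "i = Suc j")
      case True then show ?thesis by simp
    next
      case False
      then have "i \<le> j" using Suc.prems by simp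
      then show ?thesis using Suc.IH f(2)[of j] unfolding Q_def by auto
    qed
  qed
  have "D (r i) (r j) < ennreal ((1/4)^i)" if "i \<le> j" for i j
  proof -
    have "r i \<in> fst (f i)" "r j \<in> fst (f i)" using f(1)[of i] f(1)[of j] anti[OF that]
      unfolding P_def r_def by auto
    then show ?thesis using f(1)[of i] unfolding P_def by auto
  qed
  ultimately show ?thesis by blast
qed


lemma amgm_aux:
  fixes p d :: real
  assumes "0 < p"
  shows "\<bar>d\<bar> \<le> p * d^2 + 1 / p"
proof -
  have "0 \<le> (p * \<bar>d\<bar> - 1)^2 / p" using assms by simp
  also have "(p * \<bar>d\<bar> - 1)^2 / p = p * d^2 + 1/p - 2 * \<bar>d\<bar>"
    using assms by (simp add: power2_eq_square field_simps)
  finally show ?thesis using abs_ge_zero[of d] by linarith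
qed

lemma L2_limit:
  fixes H :: "nat \<Rightarrow> real \<Rightarrow> real"
  assumes meas[measurable]: "\<And>i. H i \<in> borel_measurable lborel"
    and D: "\<And>i j. i \<le> j \<Longrightarrow> (\<integral>\<^sup>+t. ennreal ((H i t - H j t)^2) \<partial>lborel) < ennreal ((1/4)^i)"
  shows "\<exists>f\<in>borel_measurable lborel. (\<forall>t. (\<forall>i. H i t = 0) \<longrightarrow> f t = 0) \<and>
           (\<forall>k. (\<integral>\<^sup>+t. ennreal ((H k t - f t)^2) \<partial>lborel) \<le> ennreal ((1/4)^k))"
proof -
  define d where "d i t = H (Suc i) t - H i t" for i t
  define \<Phi> where "\<Phi> t = (\<Sum>i. ennreal (2^i * (d i t)^2))" for t
  have "(\<integral>\<^sup>+t. \<Phi> t \<partial>lborel) = (\<Sum>i. (\<integral>\<^sup>+t. ennreal (2^i * (d i t)^2) \<partial>lborel))"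
    unfolding \<Phi>_def d_def by (rule nn_integral_suminf) measurable
  also have "\<dots> \<le> (\<Sum>i. ennreal ((1/2)^i))"
  proof (rule suminf_le)
    fix i
    have "(\<integral>\<^sup>+t. ennreal (2^i * (d i t)^2) \<partial>lborel) = ennreal (2^i) * (\<integral>\<^sup>+t. ennreal ((d i t)^2) \<partial>lborel)"
      by (subst nn_integral_cmult[symmetric]) (simp_all add: ennreal_mult d_def)
    also have "(\<integral>\<^sup>+t. ennreal ((d i t)^2) \<partial>lborel) = (\<integral>\<^sup>+t. ennreal ((H i t - H (Suc i) t)^2) \<partial>lborel)"
      unfolding d_def by (simp add: power2_commute)
    also have "ennreal (2^i) * \<dots> \<le> ennreal (2^i) * ennreal ((1/4)^i)"
      using D[of i "Suc i"] by (intro mult_left_mono) auto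
    also have "\<dots> = ennreal ((1/2)^i)"
      by (simp add: ennreal_mult[symmetric] power_mult_distrib[symmetric])
    finally show "(\<integral>\<^sup>+t. ennreal (2^i * (d i t)^2) \<partial>lborel) \<le> ennreal ((1/2)^i)" .
  qed auto
  also have "\<dots> = ennreal 2"
    by (rule suminf_ennreal_eq) (auto intro: geometric_sums[of "1/2::real", simplified])
  finally have int\<Phi>: "(\<integral>\<^sup>+t. \<Phi> t \<partial>lborel) < \<infinity>" by (simp add: le_less_trans)
  have "AE t in lborel. \<Phi> t < \<infinity>"
    by (rule finite_nn_integral_imp_ae_finite[OF _ int\<Phi>]) (unfold \<Phi>_def d_def, measurable)
  then have conv: "AE t in lborel. convergent (\<lambda>i. H i t)"
  proof (rule AE_mp, intro AE_I2 impI)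
    fix t assume "\<Phi> t < \<infinity>"
    then have "summable (\<lambda>i. 2^i * (d i t)^2)"
      unfolding \<Phi>_def by (intro summable_suminf_not_top) auto
    moreover have "summable (\<lambda>i. (1/2::real)^i)" by simp
    ultimately have sg: "summable (\<lambda>i. 2^i * (d i t)^2 + (1/2::real)^i)" by (rule summable_add)
    have bnd: "norm (norm (d i t)) \<le> 2^i * (d i t)^2 + (1/2)^i" for i
      using amgm_aux[of "2^i" "d i t"] by (simp add: power_one_over)
    have "summable (\<lambda>i. norm (d i t))"
      by (rule summable_comparison_test'[OF sg, of 0]) (rule bnd)
    then have "summable (\<lambda>i. d i t)" by (rule summable_norm_cancel)
    then have "convergent (\<lambda>n. \<Sum>i<n. d i t)"
      using summable_LIMSEQ convergent_def by blast
    moreover have "(\<lambda>n. \<Sum>i<n. d i t) = (\<lambda>n. H n t - H 0 t)"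
      unfolding d_def by (rule ext) (rule sum_lessThan_telescope)
    ultimately have "convergent (\<lambda>n. H n t - H 0 t + H 0 t)"
      by (intro convergent_add) (auto intro: convergent_const)
    then show "convergent (\<lambda>i. H i t)" by simp
  qed
  define f where "f t = lim (\<lambda>i. H i t)" for t
  have fm: "f \<in> borel_measurable lborel" unfolding f_def by measurable
  have f0: "f t = 0" if "\<forall>i. H i t = 0" for t
    using that unfolding f_def by (simp add: limI)
  have bound: "(\<integral>\<^sup>+t. ennreal ((H k t - f t)^2) \<partial>lborel) \<le> ennreal ((1/4)^k)" for k
  proof -
    have "AE t in lborel. ennreal ((H k t - f t)^2) = liminf (\<lambda>j. ennreal ((H k t - H j t)^2))"
    proof (rule AE_mp[OF conv], intro AE_I2 impI)
      fix t assume "convergent (\<lambda>i. H i t)"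
      then have "(\<lambda>j. H j t) \<longlonglongrightarrow> f t" unfolding f_def by (simp add: convergent_LIMSEQ_iff)
      then have "(\<lambda>j. ennreal ((H k t - H j t)^2)) \<longlonglongrightarrow> ennreal ((H k t - f t)^2)"
        by (intro tendsto_ennrealI tendsto_intros)
      then show "ennreal ((H k t - f t)^2) = liminf (\<lambda>j. ennreal ((H k t - H j t)^2))"
        by (metis lim_imp_Liminf trivial_limit_sequentially)
    qed
    then have "(\<integral>\<^sup>+t. ennreal ((H k t - f t)^2) \<partial>lborel) = (\<integral>\<^sup>+t. liminf (\<lambda>j. ennreal ((H k t - H j t)^2)) \<partial>lborel)"
      by (rule nn_integral_cong_AE)
    also have "\<dots> \<le> liminf (\<lambda>j. \<integral>\<^sup>+t. ennreal ((H k t - H j t)^2) \<partial>lborel)"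
      by (rule nn_integral_liminf) measurable
    also have "\<dots> \<le> ennreal ((1/4)^k)"
    proof (rule Liminf_le)
      show "\<forall>\<^sub>F j in sequentially. (\<integral>\<^sup>+t. ennreal ((H k t - H j t)^2) \<partial>lborel) \<le> ennreal ((1/4)^k)"
        using eventually_ge_at_top[of k] by eventually_elim (use D in \<open>auto intro: less_imp_le\<close>)
    qed simp
    finally show ?thesis .
  qed
  show ?thesis using fm f0 bound by blast
qed


lemma decay_eq:
  fixes s :: real
  shows "2^(m+1) * (2/2^m) powr (1 + 2 * s) = 2 powr (2 + 2 * s) * (2 powr (-2 * s))^m"
proof -
  have a: "(2::real)/2^m = 2 powr (1 - real m)"
    by (simp add: powr_diff powr_realpow)
  have b: "(2::real)^(m+1) = 2 powr (real m + 1)"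
    using powr_realpow[of 2 "m+1"] by (simp add: add.commute)
  have "2^(m+1) * (2/2^m) powr (1 + 2 * s) = 2 powr (real m + 1 + (1 - real m) * (1 + 2 * s))"
    unfolding a b by (simp only: powr_powr powr_add[symmetric])
  also have "real m + 1 + (1 - real m) * (1 + 2 * s) = (2 + 2 * s) + real m * (-2 * s)"
    by (simp add: algebra_simps)
  also have "(2::real) powr \<dots> = 2 powr (2 + 2 * s) * (2 powr (-2 * s))^m"
  proof -
    have "((2::real) powr (-2 * s))^m = 2 powr (real m * (-2 * s))" by (rule powr_power) simp
    then show ?thesis by (simp only: powr_add)
  qed
  finally show ?thesis .
qed

lemma decay:
  fixes s lam1 M \<epsilon> :: real
  assumes "0 < s" "0 < lam1" "0 < \<epsilon>"
  shows "\<exists>m. 2^(m+1) * ((2/2^m) powr (1 + 2 * s) / lam1) * M \<le> \<epsilon>"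
proof -
  have q: "\<bar>(2::real) powr (-2 * s)\<bar> < 1" using assms by (simp add: powr_less_one)
  have "(\<lambda>m. (2 powr (2 + 2 * s) * M / lam1) * (2 powr (-2 * s))^m) \<longlonglongrightarrow> (2 powr (2 + 2 * s) * M / lam1) * 0"
    by (intro tendsto_mult tendsto_const LIMSEQ_power_zero) (use q in auto)
  then have "eventually (\<lambda>m. (2 powr (2 + 2 * s) * M / lam1) * (2 powr (-2 * s))^m < \<epsilon>) sequentially"
    using assms by (intro order_tendstoD) auto
  then obtain m where "(2 powr (2 + 2 * s) * M / lam1) * (2 powr (-2 * s))^m < \<epsilon>"
    by (meson eventually_sequentially order.refl)
  moreover have "2^(m+1) * ((2/2^m) powr (1 + 2 * s) / lam1) * M = (2^(m+1) * (2/2^m) powr (1 + 2 * s)) * M / lam1"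
    by simp
  moreover have "(2^(m+1) * (2/2^m) powr (1 + 2 * s)) * M / lam1 = (2 powr (2 + 2 * s) * (2 powr (-2 * s))^m) * M / lam1"
    by (simp only: decay_eq)
  moreover have "(2 powr (2 + 2 * s) * (2 powr (-2 * s))^m) * M / lam1 = (2 powr (2 + 2 * s) * M / lam1) * (2 powr (-2 * s))^m"
    by (simp add: algebra_simps)
  ultimately show ?thesis by (intro exI[of _ m]) linarith
qed

lemma int_tri:
  fixes f g h :: "real \<Rightarrow> real"
  assumes [measurable]: "f \<in> borel_measurable lborel" "g \<in> borel_measurable lborel" "h \<in> borel_measurable lborel"
  shows "(\<integral>\<^sup>+t. ennreal ((f t - g t)^2) \<partial>lborel)
     \<le> 2 * (\<integral>\<^sup>+t. ennreal ((f t - h t)^2) \<partial>lborel) + 2 * (\<integral>\<^sup>+t. ennreal ((g t - h t)^2) \<partial>lborel)"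
proof -
  have "(\<integral>\<^sup>+t. ennreal ((f t - g t)^2) \<partial>lborel)
     \<le> (\<integral>\<^sup>+t. 2 * ennreal ((f t - h t)^2) + 2 * ennreal ((g t - h t)^2) \<partial>lborel)"
  proof (intro nn_integral_mono)
    fix t
    have "(f t - g t)^2 \<le> 2 * (f t - h t)^2 + 2 * (g t - h t)^2"
    proof -
      have e: "2 * (f t - h t)^2 + 2 * (g t - h t)^2 - (f t - g t)^2 = ((f t - h t) + (g t - h t))^2"
        unfolding power2_eq_square by algebra
      show ?thesis using e zero_le_power2[of "(f t - h t) + (g t - h t)"] by linarith
    qed
    then have "ennreal ((f t - g t)^2) \<le> ennreal (2 * (f t - h t)^2 + 2 * (g t - h t)^2)"
      by (rule ennreal_leI)
    also have "\<dots> = 2 * ennreal ((f t - h t)^2) + 2 * ennreal ((g t - h t)^2)"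
      by (simp add: ennreal_plus ennreal_mult)
    finally show "ennreal ((f t - g t)^2) \<le> 2 * ennreal ((f t - h t)^2) + 2 * ennreal ((g t - h t)^2)" .
  qed
  also have "\<dots> = 2 * (\<integral>\<^sup>+t. ennreal ((f t - h t)^2) \<partial>lborel) + 2 * (\<integral>\<^sup>+t. ennreal ((g t - h t)^2) \<partial>lborel)"
    by (simp add: nn_integral_add nn_integral_cmult)
  finally show ?thesis .
qed

lemma ennreal_comb:
  assumes "X \<le> ennreal a" "Y \<le> ennreal b" "0 \<le> a" "0 \<le> b"
  shows "2 * X + 2 * Y \<le> ennreal (2 * a + 2 * b)"
proof -
  have "2 * X + 2 * Y \<le> 2 * ennreal a + 2 * ennreal b"
    using assms by (intro add_mono mult_left_mono) auto
  also have "\<dots> = ennreal (2 * a + 2 * b)" using assms by (simp add: ennreal_plus ennreal_mult)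
  finally show ?thesis .
qed

lemma Sf_zero: "Sf n (\<lambda>_. 0) t = 0"
  unfolding Sf_def by simp

lemma int_sq:
  "(\<integral>\<^sup>+t. ennreal ((Sf n w t)^2) \<partial>lborel) = ennreal (\<Sum>x\<in>V1 n. (w x)^2 * mu1 n x)"
proof -
  have "(\<integral>\<^sup>+t. ennreal ((Sf n w t)^2) \<partial>lborel) = (\<integral>\<^sup>+t. ennreal ((Sf n w t - Sf n (\<lambda>_. 0) t)^2) \<partial>lborel)"
    by (simp add: Sf_zero)
  also have "\<dots> = ennreal (\<Sum>x\<in>V1 n. \<Sum>y\<in>V1 n. (w x - 0)^2 * wt n n x y)"
    by (rule int_sq_diff)
  also have "(\<Sum>x\<in>V1 n. \<Sum>y\<in>V1 n. (w x - 0)^2 * wt n n x y) = (\<Sum>x\<in>V1 n. (w x)^2 * mu1 n x)"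
    by (simp add: wt_rowsum flip: sum_distrib_left)
  finally show ?thesis .
qed

lemma Sf_diff: "Sf n v t - Sf n q t = Sf n (\<lambda>y. v y - q y) t"
  unfolding Sf_def by (simp add: sum_subtractf left_diff_distrib)


lemma cauchy_step:
  fixes nb :: "nat \<Rightarrow> nat" and U :: "nat \<Rightarrow> real \<Rightarrow> real" and M \<epsilon> :: real
  assumes nb: "strict_mono nb" and lam: "0 < lam1" and s: "0 < s"
    and lb: "\<And>n x y. x \<in> V1 n \<Longrightarrow> y \<in> V1 n \<Longrightarrow> x \<noteq> y \<Longrightarrow> lam1 * \<bar>x - y\<bar> powr (-(1 + 2 * s)) \<le> j1 r n x y"
    and bE: "\<And>k. E1 r (nb k) (U k) \<le> M"
    and bL: "\<And>k. (\<Sum>x\<in>V1 (nb k). (U k x)^2 * mu1 (nb k) x) \<le> M"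
    and eps: "0 < \<epsilon>" and K: "infinite K"
  shows "\<exists>K'\<subseteq>K. infinite K' \<and> (\<forall>a\<in>K'. \<forall>b\<in>K'.
           (\<integral>\<^sup>+t. ennreal ((Sf (nb a) (U a) t - Sf (nb b) (U b) t)^2) \<partial>lborel) < ennreal \<epsilon>)"
proof -
  have M0: "0 \<le> M"
    using bL[of 0] sum_nonneg[of "V1 (nb 0)" "\<lambda>x. (U 0 x)^2 * mu1 (nb 0) x"] mu1_nonneg by force
  obtain m where m: "2^(m+1) * ((2/2^m) powr (1 + 2 * s) / lam1) * M \<le> \<epsilon>/32"
    using decay[OF s lam, of "\<epsilon>/32" M] eps by auto
  define C where "C = 2^(m+1) * ((2/2^m) powr (1 + 2 * s) / lam1)"
  have C0: "0 \<le> C" unfolding C_def using lam by simp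
  define \<delta> where "\<delta> = sqrt (\<epsilon>/32)"
  have \<delta>: "0 < \<delta>" "\<delta>^2 = \<epsilon>/32" unfolding \<delta>_def using eps by auto
  define K0 where "K0 = {k\<in>K. m \<le> nb k}"
  have "K - {..<m} \<subseteq> K0" unfolding K0_def by (auto simp: not_less intro: order_trans[OF _ seq_suble[OF nb]])
  moreover have "infinite (K - {..<m})" by (rule Diff_infinite_finite[OF _ K]) simp
  ultimately have K0inf: "infinite K0" by (rule infinite_super)
  define v where "v k = avg (nb k) m (U k)" for k
  define B where "B = sqrt (2^(m+1) * M)"
  define J where "J = \<lceil>B / \<delta>\<rceil> + 1"
  define Q where "Q = (\<lambda>j. \<delta> * of_int j) ` {-J..J}"
  define q where "q k = restrict (\<lambda>y. \<delta> * of_int (round (v k y / \<delta>))) (V1 m)" for k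
  have vB: "\<bar>v k y\<bar> \<le> B" if "y \<in> V1 m" for k y
  proof -
    have "(v k y)^2 \<le> 2^(m+1) * (\<Sum>x\<in>V1 (nb k). (U k x)^2 * mu1 (nb k) x)"
      unfolding v_def by (rule avg_sq[OF that])
    also have "\<dots> \<le> 2^(m+1) * M" by (intro mult_left_mono bL) simp
    finally have "\<bar>v k y\<bar>^2 \<le> 2^(m+1) * M" by simp
    then show ?thesis unfolding B_def by (rule real_le_rsqrt)
  qed
  have qQ: "q k \<in> (\<Pi>\<^sub>E y\<in>V1 m. Q)" for k
  proof -
    have "\<delta> * of_int (round (v k y / \<delta>)) \<in> Q" if y: "y \<in> V1 m" for y
    proof -
      have r: "\<bar>of_int (round (v k y / \<delta>)) - v k y / \<delta>\<bar> \<le> 1/2" by (rule of_int_round_abs_le)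
      have "\<bar>v k y / \<delta>\<bar> \<le> B / \<delta>" using vB[OF y] \<delta> by (simp add: divide_right_mono abs_divide)
      moreover have "B / \<delta> \<le> of_int \<lceil>B / \<delta>\<rceil>" by (rule le_of_int_ceiling)
      ultimately have "\<bar>of_int (round (v k y / \<delta>)) :: real\<bar> \<le> of_int J" unfolding J_def using r by linarith
      then have "\<bar>round (v k y / \<delta>)\<bar> \<le> J" by (metis of_int_abs of_int_le_iff)
      then have "round (v k y / \<delta>) \<in> {-J..J}" by (simp add: abs_le_iff)
      then show ?thesis unfolding Q_def by auto
    qed
    then show ?thesis unfolding q_def by auto
  qed
  have "finite (q ` K0)"
    by (rule finite_subset[OF _ finite_PiE[of "V1 m" "\<lambda>_. Q"]]) (use qQ Q_def in auto)
  then obtain q0 where "q0 \<in> q ` K0" and inf': "infinite (q -` {q0} \<inter> K0)"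
    using inf_img_fin_domE'[OF _ K0inf] by metis
  define K' where "K' = q -` {q0} \<inter> K0"
  have key: "(\<integral>\<^sup>+t. ennreal ((Sf (nb a) (U a) t - Sf m q0 t)^2) \<partial>lborel) \<le> ennreal (\<epsilon>/8)"
    if a: "a \<in> K'" for a
  proof -
    have ma: "m \<le> nb a" and qa: "q a = q0" using a unfolding K'_def K0_def by auto
    have "(\<integral>\<^sup>+t. ennreal ((Sf (nb a) (U a) t - Sf m (v a) t)^2) \<partial>lborel)
        = ennreal (\<Sum>x\<in>V1 (nb a). \<Sum>y\<in>V1 m. (U a x - v a y)^2 * wt (nb a) m x y)"
      by (rule int_sq_diff)
    also have "\<dots> \<le> ennreal (C * E1 r (nb a) (U a))"
      unfolding v_def C_def by (intro ennreal_leI approx_bound[OF ma lam _ lb]) (use s in auto)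
    also have "\<dots> \<le> ennreal (\<epsilon>/32)"
      using m mult_left_mono[OF bE[of a] C0] unfolding C_def by (intro ennreal_leI) linarith
    finally have I1: "(\<integral>\<^sup>+t. ennreal ((Sf (nb a) (U a) t - Sf m (v a) t)^2) \<partial>lborel) \<le> ennreal (\<epsilon>/32)" .
    have "(\<integral>\<^sup>+t. ennreal ((Sf m q0 t - Sf m (v a) t)^2) \<partial>lborel)
        = (\<integral>\<^sup>+t. ennreal ((Sf m (\<lambda>y. q0 y - v a y) t)^2) \<partial>lborel)"
      by (simp add: Sf_diff)
    also have "\<dots> = ennreal (\<Sum>y\<in>V1 m. (q0 y - v a y)^2 * mu1 m y)" by (rule int_sq)
    also have "\<dots> \<le> ennreal (\<Sum>y\<in>V1 m. \<delta>^2 * mu1 m y)"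
    proof (intro ennreal_leI sum_mono mult_right_mono mu1_nonneg)
      fix y assume y: "y \<in> V1 m"
      have "q0 y = \<delta> * of_int (round (v a y / \<delta>))" using qa y unfolding q_def by auto
      moreover have "\<bar>of_int (round (v a y / \<delta>)) - v a y / \<delta>\<bar> \<le> 1/2" by (rule of_int_round_abs_le)
      moreover have "\<delta> * of_int (round (v a y / \<delta>)) - v a y = \<delta> * (of_int (round (v a y / \<delta>)) - v a y / \<delta>)"
        using \<delta>(1) by (simp add: right_diff_distrib)
      ultimately have "\<bar>q0 y - v a y\<bar> = \<bar>\<delta> * (of_int (round (v a y / \<delta>)) - v a y / \<delta>)\<bar>"
        by simp
      also have "\<dots> = \<delta> * \<bar>of_int (round (v a y / \<delta>)) - v a y / \<delta>\<bar>"
        using \<delta>(1) by (simp only: abs_mult abs_of_pos)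
      also have "\<dots> \<le> \<delta> * (1/2)"
        using \<delta>(1) of_int_round_abs_le[of "v a y / \<delta>"] by (intro mult_left_mono) auto
      finally have "\<bar>q0 y - v a y\<bar> \<le> \<delta>" using \<delta>(1) by linarith
      then show "(q0 y - v a y)^2 \<le> \<delta>^2"
        by (metis abs_ge_zero power2_abs power_mono)
    qed
    also have "\<dots> = ennreal (\<epsilon>/32)" unfolding \<delta>(2)[symmetric] by (simp add: sum_mu1 flip: sum_distrib_left)
    finally have I2: "(\<integral>\<^sup>+t. ennreal ((Sf m q0 t - Sf m (v a) t)^2) \<partial>lborel) \<le> ennreal (\<epsilon>/32)" .
    have "(\<integral>\<^sup>+t. ennreal ((Sf (nb a) (U a) t - Sf m q0 t)^2) \<partial>lborel)
       \<le> 2 * (\<integral>\<^sup>+t. ennreal ((Sf (nb a) (U a) t - Sf m (v a) t)^2) \<partial>lborel)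
         + 2 * (\<integral>\<^sup>+t. ennreal ((Sf m q0 t - Sf m (v a) t)^2) \<partial>lborel)"
      by (rule int_tri) simp_all
    also have "\<dots> \<le> ennreal (2 * (\<epsilon>/32) + 2 * (\<epsilon>/32))"
      by (rule ennreal_comb[OF I1 I2]) (use eps in auto)
    also have "\<dots> = ennreal (\<epsilon>/8)" by simp
    finally show ?thesis .
  qed
  have "(\<integral>\<^sup>+t. ennreal ((Sf (nb a) (U a) t - Sf (nb b) (U b) t)^2) \<partial>lborel) < ennreal \<epsilon>"
    if "a \<in> K'" "b \<in> K'" for a b
  proof -
    have "(\<integral>\<^sup>+t. ennreal ((Sf (nb a) (U a) t - Sf (nb b) (U b) t)^2) \<partial>lborel)
       \<le> 2 * (\<integral>\<^sup>+t. ennreal ((Sf (nb a) (U a) t - Sf m q0 t)^2) \<partial>lborel)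
         + 2 * (\<integral>\<^sup>+t. ennreal ((Sf (nb b) (U b) t - Sf m q0 t)^2) \<partial>lborel)"
      by (rule int_tri) simp_all
    also have "\<dots> \<le> ennreal (2 * (\<epsilon>/8) + 2 * (\<epsilon>/8))"
      by (rule ennreal_comb[OF key[OF that(1)] key[OF that(2)]]) (use eps in auto)
    also have "\<dots> < ennreal \<epsilon>" using eps by (intro ennreal_lessI) auto
    finally show ?thesis .
  qed
  moreover have "K' \<subseteq> K" unfolding K'_def K0_def by auto
  ultimately show ?thesis using inf' unfolding K'_def[symmetric] by blast
qed


theorem proposition5p12:
  fixes r :: "nat \<Rightarrow> lbl \<Rightarrow> real" and s lam1 Lam1 :: real
    and u :: "nat \<Rightarrow> real \<Rightarrow> real"
  assumes r: "weights_ok r"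
    and s: "0 < s" "s < 1/2"
    and lam: "0 < lam1" "lam1 \<le> Lam1"
    and bounds: "\<And>n x y. x \<in> V1 n \<Longrightarrow> y \<in> V1 n \<Longrightarrow> x \<noteq> y \<Longrightarrow>
        lam1 * \<bar>x - y\<bar> powr (-(1 + 2 * s)) \<le> j1 r n x y \<and>
        j1 r n x y \<le> Lam1 * \<bar>x - y\<bar> powr (-(1 + 2 * s))"
    and fin: "liminf (\<lambda>n. ereal (E1 r n (u n) + (\<Sum>x\<in>V1 n. \<bar>u n x\<bar>^2 * mu1 n x)))
               < \<infinity>"
  shows "\<exists>nk :: nat \<Rightarrow> nat. strict_mono nk \<and>
           (\<exists>f :: real \<Rightarrow> real. f \<in> borel_measurable (lebesgue_on {0..1}) \<and>
              (\<integral>\<^sup>+ x\<in>{0..1}. ennreal ((f x)^2) \<partial>lborel) < \<infinity> \<and>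
              ((\<lambda>k. \<integral>\<^sup>+ x\<in>{0..1}. ennreal ((Ext1 (nk k) (u (nk k)) x - f x)^2) \<partial>lborel)
                 \<longlonglongrightarrow> 0))"
proof -
  define a where "a n = E1 r n (u n) + (\<Sum>x\<in>V1 n. \<bar>u n x\<bar>^2 * mu1 n x)" for n
  have lb: "\<And>n x y. x \<in> V1 n \<Longrightarrow> y \<in> V1 n \<Longrightarrow> x \<noteq> y \<Longrightarrow> lam1 * \<bar>x - y\<bar> powr (-(1 + 2 * s)) \<le> j1 r n x y"
    using bounds by blast
  have E0: "0 \<le> E1 r n w" for n w
    unfolding E1_def
    by (intro sum_nonneg mult_nonneg_nonneg j1_nonneg[OF lam(1) lb] mu1_nonneg) auto
  have L0: "0 \<le> (\<Sum>x\<in>V1 n. \<bar>w x\<bar>^2 * mu1 n x)" for n and w :: "real \<Rightarrow> real"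
    by (intro sum_nonneg mult_nonneg_nonneg mu1_nonneg) auto
  have "liminf (\<lambda>n. ereal (a n)) \<noteq> \<infinity>" using fin unfolding a_def by simp
  then obtain N :: nat where "liminf (\<lambda>n. ereal (a n)) < ereal (real N)"
    using less_PInf_Ex_of_nat by blast
  then obtain y where y: "y < ereal (real N)" "\<not> eventually (\<lambda>n. y < ereal (a n)) sequentially"
    using le_Liminf_iff[of "ereal (real N)" sequentially "\<lambda>n. ereal (a n)"] by (auto simp: not_le)
  define M where "M = real N"
  have "infinite {n. \<not> y < ereal (a n)}"
    using y(2) unfolding cofinite_eq_sequentially[symmetric] eventually_cofinite by simp
  moreover have "{n. \<not> y < ereal (a n)} \<subseteq> {n. a n < M}"
  proof
    fix n assume "n \<in> {n. \<not> y < ereal (a n)}"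
    then have "ereal (a n) \<le> y" by (simp add: not_less)
    then have "ereal (a n) < ereal M" using y(1) unfolding M_def by (rule le_less_trans)
    then show "n \<in> {n. a n < M}" by simp
  qed
  ultimately have "infinite {n. a n < M}" by (rule infinite_super[rotated])
  then obtain nb :: "nat \<Rightarrow> nat" where nb: "strict_mono nb" "\<And>k. nb k \<in> {n. a n < M}"
    using infinite_enumerate by blast
  define U where "U k = u (nb k)" for k
  have bE: "E1 r (nb k) (U k) \<le> M" for k
    using nb(2)[of k] L0[where n="nb k" and w="U k"] unfolding a_def U_def by auto
  have bL: "(\<Sum>x\<in>V1 (nb k). (U k x)^2 * mu1 (nb k) x) \<le> M" for k
    using nb(2)[of k] E0[where n="nb k" and w="U k"] unfolding a_def U_def by auto
  define D where "D a b = (\<integral>\<^sup>+t. ennreal ((Sf (nb a) (U a) t - Sf (nb b) (U b) t)^2) \<partial>lborel)" for a b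
  have "\<exists>K'\<subseteq>K. infinite K' \<and> (\<forall>a\<in>K'. \<forall>b\<in>K'. D a b < ennreal \<epsilon>)"
    if "\<epsilon> > 0" "infinite K" for \<epsilon> K
    unfolding D_def by (rule cauchy_step[OF nb(1) lam(1) s(1) lb bE bL that])
  then obtain rr where rr: "strict_mono rr" "\<And>i j. i \<le> j \<Longrightarrow> D (rr i) (rr j) < ennreal ((1/4)^i)"
    using diag[of D] by blast
  define H where "H i = Sf (nb (rr i)) (U (rr i))" for i
  have Hm: "H i \<in> borel_measurable lborel" for i unfolding H_def by simp
  obtain f where fm: "f \<in> borel_measurable lborel" and f0: "\<And>t. (\<forall>i. H i t = 0) \<Longrightarrow> f t = 0"
    and fb: "\<And>k. (\<integral>\<^sup>+t. ennreal ((H k t - f t)^2) \<partial>lborel) \<le> ennreal ((1/4)^k)"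
    using L2_limit[of H, OF Hm] rr(2) unfolding D_def H_def by blast
  define nk where "nk k = nb (rr k)" for k
  have nkm: "strict_mono nk" unfolding nk_def using strict_mono_o[OF nb(1) rr(1)] by (simp add: o_def)
  have pt: "ennreal ((Ext1 (nk k) (u (nk k)) t - f t)^2) * indicator {0..1} t = ennreal ((H k t - f t)^2)" for k t
  proof (cases "0 \<le> t \<and> t \<le> 1")
    case True
    then have "Ext1 (nk k) (u (nk k)) t = H k t"
      unfolding H_def nk_def U_def using Ext1_cen Sf_in by auto
    then show ?thesis using True by simp
  next
    case False
    then have "H i t = 0" for i unfolding H_def by (simp add: Sf_out)
    then have "f t = 0" "H k t = 0" using f0 by auto
    then show ?thesis using False by simp
  qed
  have fl: "f \<in> borel_measurable (lebesgue_on {0..1})"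
    by (intro measurable_restrict_space1 measurable_completion) (use fm in simp)
  have "(\<integral>\<^sup>+ x\<in>{0..1}. ennreal ((f x)^2) \<partial>lborel) \<le> (\<integral>\<^sup>+ x. ennreal ((f x - 0)^2) \<partial>lborel)"
    by (intro nn_integral_mono) (auto simp: indicator_def)
  also have "\<dots> \<le> 2 * (\<integral>\<^sup>+t. ennreal ((f t - H 0 t)^2) \<partial>lborel) + 2 * (\<integral>\<^sup>+t. ennreal ((0 - H 0 t)^2) \<partial>lborel)"
    by (rule int_tri[OF fm _ Hm]) simp
  also have "\<dots> \<le> ennreal (2 * 1 + 2 * M)"
  proof (rule ennreal_comb)
    have "(\<integral>\<^sup>+t. ennreal ((f t - H 0 t)^2) \<partial>lborel) = (\<integral>\<^sup>+t. ennreal ((H 0 t - f t)^2) \<partial>lborel)"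
      by (simp add: power2_commute)
    also have "\<dots> \<le> ennreal 1" using fb[of 0] by simp
    finally show "(\<integral>\<^sup>+t. ennreal ((f t - H 0 t)^2) \<partial>lborel) \<le> ennreal 1" .
    have "(\<integral>\<^sup>+t. ennreal ((0 - H 0 t)^2) \<partial>lborel) = (\<integral>\<^sup>+t. ennreal ((H 0 t)^2) \<partial>lborel)"
      by simp
    also have "\<dots> = ennreal (\<Sum>x\<in>V1 (nb (rr 0)). (U (rr 0) x)^2 * mu1 (nb (rr 0)) x)"
      unfolding H_def by (rule int_sq)
    also have "\<dots> \<le> ennreal M" using bL by (intro ennreal_leI) auto
    finally show "(\<integral>\<^sup>+t. ennreal ((0 - H 0 t)^2) \<partial>lborel) \<le> ennreal M" .
    show "0 \<le> M" using bL[of 0] L0[where n="nb 0" and w="U 0"] by simp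
  qed simp
  also have "\<dots> < \<infinity>" by simp
  finally have ffin: "(\<integral>\<^sup>+ x\<in>{0..1}. ennreal ((f x)^2) \<partial>lborel) < \<infinity>" .
  have eqk: "(\<integral>\<^sup>+ x\<in>{0..1}. ennreal ((Ext1 (nk k) (u (nk k)) x - f x)^2) \<partial>lborel)
      = (\<integral>\<^sup>+t. ennreal ((H k t - f t)^2) \<partial>lborel)" for k
    using pt by (intro nn_integral_cong) simp
  have lim0: "(\<lambda>k. ennreal ((1/4)^k)) \<longlonglongrightarrow> ennreal 0"
    by (intro tendsto_ennrealI LIMSEQ_power_zero) simp
  have "(\<lambda>k. \<integral>\<^sup>+ x\<in>{0..1}. ennreal ((Ext1 (nk k) (u (nk k)) x - f x)^2) \<partial>lborel) \<longlonglongrightarrow> 0"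
    unfolding eqk
  proof (rule tendsto_sandwich[of "\<lambda>_. 0" _ _ "\<lambda>k. ennreal ((1/4)^k)"])
    show "\<forall>\<^sub>F k in sequentially. 0 \<le> (\<integral>\<^sup>+t. ennreal ((H k t - f t)^2) \<partial>lborel)"
      by simp
    show "\<forall>\<^sub>F k in sequentially. (\<integral>\<^sup>+t. ennreal ((H k t - f t)^2) \<partial>lborel) \<le> ennreal ((1/4)^k)"
      by (intro always_eventually allI fb)
    show "((\<lambda>_. 0) \<longlongrightarrow> (0::ennreal)) sequentially" by simp
    show "(\<lambda>k. ennreal ((1/4)^k)) \<longlonglongrightarrow> 0" using lim0 by simp
  qed
  then show ?thesis using nkm fl ffin by blast
qed


end
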